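(* The function $\sqrt{1-\mathcal{F}_{GM}(\rho,\sigma)}$, where $\mathcal{F}_{GM}(\rho,\sigma)=\operatorname{tr}(\rho\sigma)/\sqrt{\operatorname{tr}(\rho^2)\operatorname{tr}(\sigma^2)}$, is a metric on the set of density matrices on a fixed finite-dimensional complex Hilbert space.
   Context: A density matrix is a positive semidefinite operator of unit trace. A metric is a function that is nonnegative, vanishes exactly on equal arguments, is symmetric, and satisfies the triangle inequality. *)

theory Defs
  imports "HOL-Analysis.Analysis" "HOL-Library.Complex_Order"
begin

text \<open>Positive semidefinite complex matrix: the quadratic form x* A x is a
  nonnegative real for every vector x (complex order: 0 \<le> z iff z real, Re z \<ge> 0).\<close>
definition positive_semidef :: "complex^'n^'n \<Rightarrow> bool" where
  "positive_semidef A \<longleftrightarrow>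
     (\<forall>x :: complex^'n. 0 \<le> (\<Sum>i\<in>UNIV. \<Sum>j\<in>UNIV. cnj (x$i) * (A$i$j) * (x$j)))"

definition density_matrix :: "complex^'n^'n \<Rightarrow> bool" where
  "density_matrix \<rho> \<longleftrightarrow> positive_semidef \<rho> \<and> trace \<rho> = 1"

definition density_matrices :: "(complex^'n^'n) set" where
  "density_matrices = {\<rho>. density_matrix \<rho>}"

text \<open>Geometric-mean fidelity. The traces involved are real for Hermitian matrices;
  we take real parts to land in the reals.\<close>
definition F_GM :: "complex^'n^'n \<Rightarrow> complex^'n^'n \<Rightarrow> real" where
  "F_GM \<rho> \<sigma> = Re (trace (\<rho> ** \<sigma>)) / sqrt (Re (trace (\<rho> ** \<rho>)) * Re (trace (\<sigma> ** \<sigma>)))"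

definition is_metric_on :: "'a set \<Rightarrow> ('a \<Rightarrow> 'a \<Rightarrow> real) \<Rightarrow> bool" where
  "is_metric_on S d \<longleftrightarrow>
     (\<forall>x\<in>S. \<forall>y\<in>S. 0 \<le> d x y) \<and>
     (\<forall>x\<in>S. \<forall>y\<in>S. d x y = 0 \<longleftrightarrow> x = y) \<and>
     (\<forall>x\<in>S. \<forall>y\<in>S. d x y = d y x) \<and>
     (\<forall>x\<in>S. \<forall>y\<in>S. \<forall>z\<in>S. d x z \<le> d x y + d y z)"

end

theory Submission
  imports Defs
begin

definition VV :: "complex^'n^'n \<Rightarrow> complex^('n \<times> 'n)" where
  "VV A = (\<chi> p. A $ fst p $ snd p)"

lemma ifz1: "(if P then x else (0::complex)) * y = (if P then x * y else 0)" by simp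
lemma ifz2: "y * (if P then x else (0::complex)) = (if P then y * x else 0)" by simp

lemma quad_two:
  fixes A :: "complex^'n^'n"
  assumes "i \<noteq> j"
  shows "(\<Sum>k\<in>UNIV. \<Sum>l\<in>UNIV. cnj ((\<chi> m. (if m = i then a else 0) + (if m = j then b else 0)) $ k) * (A$k$l)
            * ((\<chi> m. (if m = i then a else 0) + (if m = j then b else 0)) $ l))
        = cnj a * A$i$i * a + cnj a * A$i$j * b + cnj b * A$j$i * a + cnj b * A$j$j * b"
  using assms by (simp add: ring_distribs sum.distrib if_distrib[of cnj] ifz1 ifz2 cong: if_cong)

lemma psd_herm:
  assumes "positive_semidef (A :: complex^'n^'n)"
  shows "A$i$j = cnj (A$j$i)"
proof (cases "i = j")
  case True
  have "0 \<le> (\<Sum>k\<in>UNIV. \<Sum>l\<in>UNIV. cnj ((\<chi> m. if m = i then (1::complex) else 0) $ k) * (A$k$l)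
            * ((\<chi> m. if m = i then (1::complex) else 0) $ l))"
    using assms unfolding positive_semidef_def by blast
  also have "(\<Sum>k\<in>UNIV. \<Sum>l\<in>UNIV. cnj ((\<chi> m. if m = i then (1::complex) else 0) $ k) * (A$k$l)
            * ((\<chi> m. if m = i then (1::complex) else 0) $ l)) = A$i$i"
    by (simp add: if_distrib[of cnj] ifz1 ifz2 cong: if_cong)
  finally have "Im (A$i$i) = 0" by (simp add: less_eq_complex_def)
  then show ?thesis using True by (simp add: complex_eq_iff)
next
  case False
  have q: "\<And>x. 0 \<le> (\<Sum>k\<in>UNIV. \<Sum>l\<in>UNIV. cnj (x$k) * (A$k$l) * (x$l))"
    using assms unfolding positive_semidef_def by blast
  have h1: "0 \<le> cnj 1 * A$i$i * 1 + cnj 1 * A$i$j * 1 + cnj 1 * A$j$i * 1 + cnj 1 * A$j$j * 1"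
    using q[of "\<chi> m. (if m = i then 1 else 0) + (if m = j then 1 else 0)"] unfolding quad_two[OF False] .
  have h2: "0 \<le> cnj 1 * A$i$i * 1 + cnj 1 * A$i$j * \<i> + cnj \<i> * A$j$i * 1 + cnj \<i> * A$j$j * \<i>"
    using q[of "\<chi> m. (if m = i then 1 else 0) + (if m = j then \<i> else 0)"] unfolding quad_two[OF False] .
  have h3: "0 \<le> cnj 1 * A$i$i * 1 + cnj 1 * A$i$j * 0 + cnj 0 * A$j$i * 1 + cnj 0 * A$j$j * 0"
    using q[of "\<chi> m. (if m = i then 1 else 0) + (if m = j then 0 else 0)"] unfolding quad_two[OF False] .
  have h4: "0 \<le> cnj 0 * A$i$i * 0 + cnj 0 * A$i$j * 1 + cnj 1 * A$j$i * 0 + cnj 1 * A$j$j * 1"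
    using q[of "\<chi> m. (if m = i then 0 else 0) + (if m = j then 1 else 0)"] unfolding quad_two[OF False] .
  from h1 h2 h3 h4 show ?thesis
    by (simp add: less_eq_complex_def complex_eq_iff)
qed


lemma VV_nth [simp]: "VV A $ (i, j) = A $ i $ j"
  by (simp add: VV_def)

lemma VV_nth': "VV A $ p = A $ fst p $ snd p"
  by (simp add: VV_def)

lemma inner_VV:
  assumes "positive_semidef B"
  shows "inner (VV A) (VV B) = Re (trace (A ** B))"
proof -
  have "inner (VV A) (VV B) = (\<Sum>p\<in>UNIV. inner (VV A $ p) (VV B $ p))"
    by (simp add: inner_vec_def)
  also have "\<dots> = (\<Sum>(i,j)\<in>UNIV \<times> UNIV. inner (VV A $ (i,j)) (VV B $ (i,j)))"
    by (simp add: UNIV_Times_UNIV case_prod_beta VV_nth')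
  also have "\<dots> = (\<Sum>i\<in>UNIV. \<Sum>j\<in>UNIV. inner (A $ i $ j) (B $ i $ j))"
    by (simp add: sum.cartesian_product)
  also have "\<dots> = (\<Sum>i\<in>UNIV. \<Sum>j\<in>UNIV. Re (A $ i $ j * B $ j $ i))"
  proof (intro sum.cong refl)
    fix i j
    have "B $ j $ i = cnj (B $ i $ j)" using psd_herm[OF assms] by blast
    then show "inner (A $ i $ j) (B $ i $ j) = Re (A $ i $ j * B $ j $ i)"
      by (simp add: inner_complex_def)
  qed
  also have "\<dots> = Re (trace (A ** B))"
    by (simp add: trace_def matrix_matrix_mult_def)
  finally show ?thesis .
qed

lemma VV_nz:
  assumes "density_matrix A"
  shows "VV A \<noteq> 0"
proof
  assume "VV A = 0"
  then have "\<And>i j. A $ i $ j = 0"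
    by (metis VV_nth zero_index)
  then have "trace A = 0" by (simp add: trace_def)
  with assms show False by (simp add: density_matrix_def)
qed

definition UU :: "complex^'n^'n \<Rightarrow> complex^('n \<times> 'n)" where
  "UU A = inverse (norm (VV A)) *\<^sub>R VV A"

lemma norm_UU:
  assumes "density_matrix A" shows "norm (UU A) = 1"
  using VV_nz[OF assms] by (simp add: UU_def)

lemma F_eq:
  assumes "density_matrix A" "density_matrix B"
  shows "F_GM A B = inner (UU A) (UU B)"
proof -
  have pa: "positive_semidef A" and pb: "positive_semidef B"
    using assms by (auto simp: density_matrix_def)
  have "F_GM A B = inner (VV A) (VV B) / sqrt (inner (VV A) (VV A) * inner (VV B) (VV B))"
    unfolding F_GM_def inner_VV[OF pa] inner_VV[OF pb] ..
  also have "\<dots> = inner (VV A) (VV B) / (norm (VV A) * norm (VV B))"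
    by (simp add: real_sqrt_mult norm_eq_sqrt_inner)
  also have "\<dots> = inner (UU A) (UU B)"
    by (simp add: UU_def divide_inverse mult_ac)
  finally show ?thesis .
qed

lemma d_eq:
  assumes "density_matrix A" "density_matrix B"
  shows "sqrt (1 - F_GM A B) = norm (UU A - UU B) / sqrt 2"
proof -
  have "(norm (UU A - UU B))^2 = inner (UU A - UU B) (UU A - UU B)"
    by (simp add: power2_norm_eq_inner)
  also have "\<dots> = (norm (UU A))^2 + (norm (UU B))^2 - 2 * inner (UU A) (UU B)"
    by (simp add: inner_diff_left inner_diff_right power2_norm_eq_inner inner_commute)
  also have "\<dots> = 2 * (1 - F_GM A B)"
    using norm_UU[OF assms(1)] norm_UU[OF assms(2)] F_eq[OF assms] by simp
  finally have "1 - F_GM A B = (norm (UU A - UU B))^2 / 2" by simp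
  then show ?thesis by (simp only: real_sqrt_divide real_sqrt_abs abs_norm_cancel)
qed

lemma UU_inj:
  assumes "density_matrix A" "density_matrix B" "UU A = UU B"
  shows "A = B"
proof -
  define c where "c = norm (VV A) / norm (VV B)"
  have na: "norm (VV A) \<noteq> 0" and nb: "norm (VV B) \<noteq> 0"
    using VV_nz[OF assms(1)] VV_nz[OF assms(2)] by auto
  have "VV A = norm (VV A) *\<^sub>R UU A" using na by (simp add: UU_def)
  also have "\<dots> = norm (VV A) *\<^sub>R UU B" using assms(3) by simp
  also have "\<dots> = c *\<^sub>R VV B" using nb by (simp add: UU_def c_def divide_inverse)
  finally have eq: "VV A = c *\<^sub>R VV B" .
  have ent: "\<And>i j. A $ i $ j = of_real c * B $ i $ j"
  proof -
    fix i j
    have "VV A $ (i,j) = (c *\<^sub>R VV B) $ (i,j)" using eq by simp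
    then show "A $ i $ j = of_real c * B $ i $ j"
      unfolding vector_scaleR_component VV_nth by (simp add: scaleR_conv_of_real)
  qed
  have "trace A = of_real c * trace B"
    by (simp add: trace_def ent sum_distrib_left)
  then have "of_real c = (1::complex)" using assms(1,2) by (simp add: density_matrix_def)
  then have "c = 1" by simp
  then show ?thesis using ent by (simp add: vec_eq_iff)
qed

theorem theorem11:
  shows "is_metric_on (density_matrices :: (complex^'n^'n) set)
           (\<lambda>\<rho> \<sigma>. sqrt (1 - F_GM \<rho> \<sigma>))"
proof -
  have D: "\<And>A B. A \<in> (density_matrices :: (complex^'n^'n) set) \<Longrightarrow> B \<in> density_matrices \<Longrightarrow>
      sqrt (1 - F_GM A B) = dist (UU A) (UU B) / sqrt 2"
    by (simp add: density_matrices_def d_eq dist_norm)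
  show ?thesis
    unfolding is_metric_on_def
  proof (intro conjI ballI)
    fix x y assume x: "x \<in> (density_matrices :: (complex^'n^'n) set)" and y: "y \<in> (density_matrices :: (complex^'n^'n) set)"
    show "0 \<le> sqrt (1 - F_GM x y)" using D[OF x y] by simp
    show "sqrt (1 - F_GM x y) = sqrt (1 - F_GM y x)" using D[OF x y] D[OF y x] by (simp add: dist_commute)
    show "(sqrt (1 - F_GM x y) = 0) = (x = y)"
      using D[OF x y] UU_inj x y by (auto simp: density_matrices_def)
  next
    fix x y z assume x: "x \<in> (density_matrices :: (complex^'n^'n) set)" and y: "y \<in> (density_matrices :: (complex^'n^'n) set)"
      and z: "z \<in> (density_matrices :: (complex^'n^'n) set)"
    show "sqrt (1 - F_GM x z) \<le> sqrt (1 - F_GM x y) + sqrt (1 - F_GM y z)"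
      unfolding D[OF x z] D[OF x y] D[OF y z]
      using dist_triangle[of "UU x" "UU z" "UU y"]
      by (simp add: add_divide_distrib[symmetric] divide_right_mono)
  qed
qed

end
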